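(* Let $\mathcal{G}=(G,\lambda)$ be a simple temporal clique with vertex set $V$, and let $u,v,w$ be three distinct vertices such that $\{u,v\}=e^-(v)$ and $\{u,w\}=e^+(w)$. Let $S'$ be a temporal spanner of the simple temporal clique $\mathcal{G}[V\setminus\{u\}]$ (the complete graph on $V\setminus\{u\}$ with the restriction of $\lambda$). Then $S=S'\cup\{\{u,v\},\{u,w\}\}$ is a temporal spanner of $\mathcal{G}$.
   Context: A simple temporal clique is a pair $\mathcal{G}=(G,\lambda)$ where $G=(V,E)$ is the complete graph on a finite vertex set $V$ and $\lambda:E\to\mathbb{N}$ assigns to each edge a single integer label such that any two distinct edges sharing an endpoint have different labels. A journey from $x$ to $y$ is a sequence of vertices $x=u_0,u_1,\dots,u_k=y$ ($k\ge1$) with $\lambda(\{u_{i-1},u_i\})<\lambda(\{u_i,u_{i+1}\})$ for all $1\le i<k$. A set $E'\subseteq E$ is a temporal spanner of $\mathcal{G}$ if for every ordered pair of distinct vertices $x,y$ there is a journey from $x$ to $y$ all of whose edges belong to $E'$. For a vertex $v$, $e^-(v)$ (resp. $e^+(v)$) denotes the edge incident to $v$ with the smallest (resp. largest) label. *)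

theory Defs
  imports Main
begin

definition edges :: "'a set \<Rightarrow> 'a set set" where
  "edges V = {e. e \<subseteq> V \<and> card e = 2}"

definition simple_temporal_clique :: "'a set \<Rightarrow> ('a set \<Rightarrow> nat) \<Rightarrow> bool" where
  "simple_temporal_clique V lam \<longleftrightarrow> finite V \<and>
     (\<forall>e\<in>edges V. \<forall>f\<in>edges V. e \<noteq> f \<and> e \<inter> f \<noteq> {} \<longrightarrow> lam e \<noteq> lam f)"

definition journey :: "('a set \<Rightarrow> nat) \<Rightarrow> 'a set set \<Rightarrow> 'a \<Rightarrow> 'a \<Rightarrow> 'a list \<Rightarrow> bool" where
  "journey lam E x y p \<longleftrightarrow> length p \<ge> 2 \<and> hd p = x \<and> last p = y \<and>
     (\<forall>i. i + 1 < length p \<longrightarrow> p ! i \<noteq> p ! (i+1) \<and> {p ! i, p ! (i+1)} \<in> E) \<and>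
     (\<forall>i. i + 2 < length p \<longrightarrow> lam {p ! i, p ! (i+1)} < lam {p ! (i+1), p ! (i+2)})"

definition temporal_spanner :: "'a set \<Rightarrow> ('a set \<Rightarrow> nat) \<Rightarrow> 'a set set \<Rightarrow> bool" where
  "temporal_spanner V lam E' \<longleftrightarrow> E' \<subseteq> edges V \<and>
     (\<forall>x\<in>V. \<forall>y\<in>V. x \<noteq> y \<longrightarrow> (\<exists>p. journey lam E' x y p))"

definition e_minus :: "'a set \<Rightarrow> ('a set \<Rightarrow> nat) \<Rightarrow> 'a \<Rightarrow> 'a set" where
  "e_minus V lam v = (ARG_MIN lam e. e \<in> edges V \<and> v \<in> e)"

definition e_plus :: "'a set \<Rightarrow> ('a set \<Rightarrow> nat) \<Rightarrow> 'a \<Rightarrow> 'a set" where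
  "e_plus V lam v = (ARG_MAX lam e. e \<in> edges V \<and> v \<in> e)"

end

theory Submission
  imports Defs
begin

lemma journey_mono: "journey lam E x y p \<Longrightarrow> E \<subseteq> F \<Longrightarrow> journey lam F x y p"
  unfolding journey_def by blast

lemma journey_cons:
  assumes j: "journey lam E v y p" and "a \<noteq> v" and "{a, v} \<in> E"
    and lt: "lam {a, v} < lam {p ! 0, p ! 1}"
  shows "journey lam E a y (a # p)"
proof -
  have l: "length p \<ge> 2" and h: "hd p = v" and la: "last p = y"
    and e: "\<forall>i. i + 1 < length p \<longrightarrow> p ! i \<noteq> p ! (i+1) \<and> {p ! i, p ! (i+1)} \<in> E"
    and m: "\<forall>i. i + 2 < length p \<longrightarrow> lam {p ! i, p ! (i+1)} < lam {p ! (i+1), p ! (i+2)}"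
    using j unfolding journey_def by auto
  have p0: "p ! 0 = v" using h l by (cases p) auto
  have H1: "\<forall>i. i + 1 < length (a # p) \<longrightarrow> (a # p) ! i \<noteq> (a # p) ! (i + 1) \<and> {(a # p) ! i, (a # p) ! (i + 1)} \<in> E"
  proof (intro allI impI)
    fix i assume i: "i + 1 < length (a # p)"
    show "(a # p) ! i \<noteq> (a # p) ! (i + 1) \<and> {(a # p) ! i, (a # p) ! (i + 1)} \<in> E"
    proof (cases i)
      case 0 then show ?thesis using p0 assms by simp
    next
      case (Suc k) then show ?thesis using e i by simp
    qed
  qed
  have H2: "\<forall>i. i + 2 < length (a # p) \<longrightarrow> lam {(a # p) ! i, (a # p) ! (i + 1)} < lam {(a # p) ! (i + 1), (a # p) ! (i + 2)}"
  proof (intro allI impI)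
    fix i assume i: "i + 2 < length (a # p)"
    show "lam {(a # p) ! i, (a # p) ! (i + 1)} < lam {(a # p) ! (i + 1), (a # p) ! (i + 2)}"
    proof (cases i)
      case 0 then show ?thesis using p0 lt by (simp add: numeral_2_eq_2)
    next
      case (Suc k) then show ?thesis using m i by (simp add: numeral_2_eq_2)
    qed
  qed
  show ?thesis unfolding journey_def using H1 H2 l la by auto
qed

lemma journey_snoc:
  assumes j: "journey lam E x w p" and "a \<noteq> w" and "{w, a} \<in> E"
    and lt: "lam {p ! (length p - 2), p ! (length p - 1)} < lam {w, a}"
  shows "journey lam E x a (p @ [a])"
proof -
  have l: "length p \<ge> 2" and h: "hd p = x" and la: "last p = w"
    and e: "\<forall>i. i + 1 < length p \<longrightarrow> p ! i \<noteq> p ! (i+1) \<and> {p ! i, p ! (i+1)} \<in> E"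
    and m: "\<forall>i. i + 2 < length p \<longrightarrow> lam {p ! i, p ! (i+1)} < lam {p ! (i+1), p ! (i+2)}"
    using j unfolding journey_def by auto
  have pl: "p ! (length p - 1) = w" using la l by (subst (asm) last_conv_nth) auto
  have hh: "hd (p @ [a]) = x" using h l by (cases p) auto
  have H1: "\<forall>i. i + 1 < length (p @ [a]) \<longrightarrow> (p @ [a]) ! i \<noteq> (p @ [a]) ! (i + 1) \<and> {(p @ [a]) ! i, (p @ [a]) ! (i + 1)} \<in> E"
  proof (intro allI impI)
    fix i assume i: "i + 1 < length (p @ [a])"
    show "(p @ [a]) ! i \<noteq> (p @ [a]) ! (i + 1) \<and> {(p @ [a]) ! i, (p @ [a]) ! (i + 1)} \<in> E"
    proof (cases "i + 1 < length p")
      case True then show ?thesis using e by (simp add: nth_append)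
    next
      case False
      then have ii: "i = length p - 1" using i by simp
      have "i < length p" using ii l by simp
      then have a1: "(p @ [a]) ! i = w" using ii pl by (simp add: nth_append_left)
      have "i + 1 = length p" using ii l by simp
      then have a2: "(p @ [a]) ! (i + 1) = a" by simp
      show ?thesis unfolding a1 a2 using assms by simp
    qed
  qed
  have H2: "\<forall>i. i + 2 < length (p @ [a]) \<longrightarrow> lam {(p @ [a]) ! i, (p @ [a]) ! (i + 1)} < lam {(p @ [a]) ! (i + 1), (p @ [a]) ! (i + 2)}"
  proof (intro allI impI)
    fix i assume i: "i + 2 < length (p @ [a])"
    show "lam {(p @ [a]) ! i, (p @ [a]) ! (i + 1)} < lam {(p @ [a]) ! (i + 1), (p @ [a]) ! (i + 2)}"
    proof (cases "i + 2 < length p")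
      case True then show ?thesis using m by (simp add: nth_append)
    next
      case False
      then have ii: "i = length p - 2" using i by simp
      have b0: "i < length p" "i + 1 < length p" "i + 2 = length p" "i + 1 = length p - 1" using ii l by auto
      have b1: "(p @ [a]) ! i = p ! (length p - 2)" using b0 ii by (simp add: nth_append_left)
      have b2: "(p @ [a]) ! (i + 1) = w" using b0 pl by (simp add: nth_append_left)
      have b3: "(p @ [a]) ! (i + 2) = a" using b0 by simp
      show ?thesis unfolding b1 b2 b3 using lt pl by simp
    qed
  qed
  show ?thesis unfolding journey_def using H1 H2 l hh by auto
qed

lemma card2: "a \<noteq> b \<Longrightarrow> card {a, b} = 2" by simp

theorem theorem1:
  fixes V :: "'a set" and lam :: "'a set \<Rightarrow> nat" and u v w :: 'a and S' :: "'a set set"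
  assumes "simple_temporal_clique V lam"
    and "u \<in> V" and "v \<in> V" and "w \<in> V"
    and "u \<noteq> v" and "u \<noteq> w" and "v \<noteq> w"
    and "{u, v} = e_minus V lam v"
    and "{u, w} = e_plus V lam w"
    and "temporal_spanner (V - {u}) lam S'"
  shows "temporal_spanner V lam (S' \<union> {{u, v}, {u, w}})"
proof -
  note A = assms
  have fin: "finite V" and dist: "\<And>e f. e \<in> edges V \<Longrightarrow> f \<in> edges V \<Longrightarrow> e \<noteq> f \<Longrightarrow> e \<inter> f \<noteq> {} \<Longrightarrow> lam e \<noteq> lam f"
    using A(1) unfolding simple_temporal_clique_def by auto
  have sub: "S' \<subseteq> edges (V - {u})" and sp: "\<And>x y. x \<in> V - {u} \<Longrightarrow> y \<in> V - {u} \<Longrightarrow> x \<noteq> y \<Longrightarrow> \<exists>p. journey lam S' x y p"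
    using A(10) unfolding temporal_spanner_def by auto
  have eV: "edges (V - {u}) \<subseteq> edges V" unfolding edges_def by auto
  have uvE: "{u, v} \<in> edges V" using A(2-7) unfolding edges_def by auto
  have uwE: "{u, w} \<in> edges V" using A(2-7) unfolding edges_def by auto
  define S where "S = S' \<union> {{u, v}, {u, w}}"
  have SE: "S \<subseteq> edges V" using sub eV uvE uwE unfolding S_def by auto
  have finE: "finite (edges V)" using fin unfolding edges_def by (rule rev_finite_subset[OF finite_Pow_iff[THEN iffD2]]) auto
  have minv: "\<And>e. e \<in> edges V \<Longrightarrow> v \<in> e \<Longrightarrow> e \<noteq> {u, v} \<Longrightarrow> lam {u, v} < lam e"
  proof -
    fix e assume e: "e \<in> edges V" "v \<in> e" "e \<noteq> {u, v}"
    have "lam (e_minus V lam v) \<le> lam e"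
      unfolding e_minus_def by (rule arg_min_nat_le) (use e in auto)
    moreover have "lam {u, v} \<noteq> lam e" using dist[OF uvE e(1)] e by auto
    ultimately show "lam {u, v} < lam e" using A(8) by simp
  qed
  have maxw: "\<And>e. e \<in> edges V \<Longrightarrow> w \<in> e \<Longrightarrow> e \<noteq> {u, w} \<Longrightarrow> lam e < lam {u, w}"
  proof -
    fix e assume e: "e \<in> edges V" "w \<in> e" "e \<noteq> {u, w}"
    have bnd: "\<forall>y. y \<in> edges V \<and> w \<in> y \<longrightarrow> lam y < Max (lam ` edges V) + 1"
      using finE by (simp add: le_imp_less_Suc)
    have "lam e \<le> lam (e_plus V lam w)"
      unfolding e_plus_def by (rule arg_max_nat_le[OF _ bnd]) (use e in auto)
    moreover have "lam {u, w} \<noteq> lam e" using dist[OF uwE e(1)] e by auto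
    ultimately show "lam e < lam {u, w}" using A(9) by simp
  qed
  have main: "\<exists>p. journey lam S x y p" if xy: "x \<in> V" "y \<in> V" "x \<noteq> y" for x y
  proof (cases "x = u")
    case True
    show ?thesis
    proof (cases "y = v")
      case True
      have "journey lam S x y [u, v]" using \<open>x = u\<close> True A unfolding journey_def S_def by auto
      then show ?thesis by blast
    next
      case False
      then obtain p where p: "journey lam S' v y p" using sp[of v y] xy A True by auto
      have l: "length p \<ge> 2" and h: "hd p = v"
        and e: "p ! 0 \<noteq> p ! 1 \<and> {p ! 0, p ! 1} \<in> S'"
        using p unfolding journey_def by (auto dest!: spec[of _ 0])
      have p0: "p ! 0 = v" using h l by (cases p) auto
      have ins: "{v, p ! 1} \<in> edges (V - {u})" using e p0 sub by auto
      then have "u \<notin> {v, p ! 1}" unfolding edges_def by auto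
      then have "lam {u, v} < lam {p ! 0, p ! 1}"
        using minv[of "{v, p ! 1}"] ins eV p0 by auto
      moreover have "journey lam S v y p" by (rule journey_mono[OF p]) (auto simp: S_def)
      ultimately have "journey lam S u y (u # p)"
        using journey_cons[of lam S v y p u] A(2-7) by (auto simp: S_def)
      then show ?thesis using True by blast
    qed
  next
    case xu: False
    show ?thesis
    proof (cases "y = u")
      case yu: True
      show ?thesis
      proof (cases "x = w")
        case True
        have "journey lam S x y [w, u]" using True yu A unfolding journey_def S_def
          by (auto simp: insert_commute)
        then show ?thesis by blast
      next
        case False
        then obtain p where p: "journey lam S' x w p" using sp[of x w] xy A xu by auto
        have l: "length p \<ge> 2" and la: "last p = w"
          and e: "p ! (length p - 2) \<noteq> p ! (length p - 2 + 1) \<and> {p ! (length p - 2), p ! (length p - 2 + 1)} \<in> S'"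
          using p unfolding journey_def by (auto dest!: spec[of _ "length p - 2"])
        have "length p - 2 + 1 = length p - 1" using l by simp
        with e have e2: "p ! (length p - 2) \<noteq> p ! (length p - 1) \<and> {p ! (length p - 2), p ! (length p - 1)} \<in> S'" by simp
        have pl: "p ! (length p - 1) = w" using la l by (subst (asm) last_conv_nth) auto
        have ins: "{p ! (length p - 2), w} \<in> edges (V - {u})" using e2 pl sub by auto
        then have "u \<notin> {p ! (length p - 2), w}" unfolding edges_def by auto
        then have "lam {p ! (length p - 2), p ! (length p - 1)} < lam {w, u}"
          using maxw[of "{p ! (length p - 2), w}"] ins eV pl by (auto simp: insert_commute)
        moreover have "journey lam S x w p" by (rule journey_mono[OF p]) (auto simp: S_def)
        ultimately have "journey lam S x u (p @ [u])"
          using journey_snoc[of lam S x w p u] A(2-7) by (auto simp: S_def insert_commute)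
        then show ?thesis using yu by blast
      qed
    next
      case False
      then obtain p where "journey lam S' x y p" using sp xy xu by auto
      then have "journey lam S x y p" by (rule journey_mono) (auto simp: S_def)
      then show ?thesis by blast
    qed
  qed
  show ?thesis using SE main unfolding temporal_spanner_def S_def by blast
qed

end
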